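(* Let $\mathbf{Dt},\mathbf{Da}$ be types with $\mathrm{op}:\mathrm{opsym}\to(\mathrm{index},\mathbf{Dt})\mathrm{input}\to(\mathrm{bindex},\mathbf{Da})\mathrm{input}\to\mathbf{Dt}$ and $\mathrm{abs}:\mathrm{varsort}\to(\mathbf{Dt}\to\mathbf{Dt})\to\mathbf{Da}$, and let $\mathbf{val}=\mathrm{varsort}\to\mathrm{var}\to\mathbf{Dt}$. There exist $\mathrm{sem}:\mathrm{term}\to\mathbf{val}\to\mathbf{Dt}$ and $\mathrm{semAbs}:\mathrm{abs}\to\mathbf{val}\to\mathbf{Da}$ such that for all $\rho:\mathbf{val}$, all good terms $X,Y$, and all $inp,binp$ with good values and domains of cardinality $<|\mathrm{var}|$: (i) $\mathrm{sem}(\mathrm{Var}\;xs\;x)\,\rho=\rho\;xs\;x$; (ii) $\mathrm{sem}(\mathrm{Op}\;\delta\;inp\;binp)\,\rho=\mathrm{op}\;\delta\;(\uparrow(\lambda X.\,\mathrm{sem}\;X\;\rho)\;inp)\;(\uparrow(\lambda A.\,\mathrm{semAbs}\;A\;\rho)\;binp)$; (iii) $\mathrm{semAbs}(\mathrm{Abs}\;xs\;x\;X)\,\rho=\mathrm{abs}\;xs\;(\lambda d.\,\mathrm{sem}\;X\;(\rho[(xs,x)\leftarrow d]))$; (iv) $\mathrm{sem}(X[Y/y]_{ys})\,\rho=\mathrm{sem}\;X\;(\rho[(ys,y)\leftarrow\mathrm{sem}\;Y\;\rho])$; (v) if $\mathrm{fresh}\;xs\;x\;X$ then for all $\rho,\rho'$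 that agree everywhere except possibly at $(xs,x)$, $\mathrm{sem}\;X\;\rho=\mathrm{sem}\;X\;\rho'$.
   Context: Fix types $\mathrm{var}$, $\mathrm{varsort}$, $\mathrm{index}$, $\mathrm{bindex}$, $\mathrm{opsym}$, with $|\mathrm{var}|$ an infinite regular cardinal. $(\alpha,\beta)\,\mathrm{input}$ = partial functions $\alpha\to\beta\;\mathrm{option}$; $\uparrow g\;inp$ applies $g$ to all defined values of $inp$. Terms ($\mathrm{term}$) and abstractions ($\mathrm{abs}$) are alpha-equivalence classes of the free datatypes $\mathrm{qterm}=\mathrm{qVar}\;\mathrm{varsort}\;\mathrm{var}\mid\mathrm{qOp}\;\mathrm{opsym}\;((\mathrm{index},\mathrm{qterm})\mathrm{input})\;((\mathrm{bindex},\mathrm{qabs})\mathrm{input})$, $\mathrm{qabs}=\mathrm{qAbs}\;\mathrm{varsort}\;\mathrm{var}\;\mathrm{qterm}$ ($x$ of varsort $xs$ bound in $X$ in $\mathrm{qAbs}\;xs\;x\;X$), with lifted constructors $\mathrm{Var},\mathrm{Op},\mathrm{Abs}$; $\mathrm{fresh}\;xs\;x\;X$: the variable $x$ of varsort $xs$ does not occur free in $X$; $X[Y/y]_{ys}$: capture-avoiding substitution of $Y$ for free occurrences of the variable $y$ of varsort $ys$. Good: every $\mathrm{Op}$ node has inputs with domains of cardinality $<|\mathrm{var}|$. $\rho[(xs,x)\leftarrow d]$ is the valuation equal to $\rho$ except that it maps $xs,x$ to $d$. *)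

theory Defs
  imports Main
begin

unbundle cardinal_syntax

type_synonym ('a,'b) input = "'a \<Rightarrow> 'b option"

datatype ('index,'bindex,'varsort,'var,'opsym) qterm =
    qVar 'varsort 'var
  | qOp 'opsym "('index, ('index,'bindex,'varsort,'var,'opsym) qterm) input"
               "('bindex, ('index,'bindex,'varsort,'var,'opsym) qabs) input"
and ('index,'bindex,'varsort,'var,'opsym) qabs =
    qAbs 'varsort 'var "('index,'bindex,'varsort,'var,'opsym) qterm"

definition lift :: "('b \<Rightarrow> 'c) \<Rightarrow> ('a,'b) input \<Rightarrow> ('a,'c) input" where
  "lift g inp = map_option g \<circ> inp"

definition idom :: "('a,'b) input \<Rightarrow> 'a set" where
  "idom inp = {i. inp i \<noteq> None}"

definition sw :: "'varsort \<Rightarrow> 'var \<Rightarrow> 'var \<Rightarrow> 'varsort \<Rightarrow> 'var \<Rightarrow> 'var" where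
  "sw xs x y zs z = (if zs = xs then (if z = x then y else if z = y then x else z) else z)"

primrec qSwap :: "'varsort \<Rightarrow> 'var \<Rightarrow> 'var \<Rightarrow> ('index,'bindex,'varsort,'var,'opsym) qterm \<Rightarrow> ('index,'bindex,'varsort,'var,'opsym) qterm"
and qSwapAbs :: "'varsort \<Rightarrow> 'var \<Rightarrow> 'var \<Rightarrow> ('index,'bindex,'varsort,'var,'opsym) qabs \<Rightarrow> ('index,'bindex,'varsort,'var,'opsym) qabs" where
  "qSwap xs x y (qVar zs z) = qVar zs (sw xs x y zs z)"
| "qSwap xs x y (qOp \<delta> inp binp) = qOp \<delta> (map_option (qSwap xs x y) \<circ> inp) (map_option (qSwapAbs xs x y) \<circ> binp)"
| "qSwapAbs xs x y (qAbs zs z X) = qAbs zs (sw xs x y zs z) (qSwap xs x y X)"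

primrec qFresh :: "'varsort \<Rightarrow> 'var \<Rightarrow> ('index,'bindex,'varsort,'var,'opsym) qterm \<Rightarrow> bool"
and qFreshAbs :: "'varsort \<Rightarrow> 'var \<Rightarrow> ('index,'bindex,'varsort,'var,'opsym) qabs \<Rightarrow> bool" where
  "qFresh xs x (qVar ys y) = (\<not> (ys = xs \<and> y = x))"
| "qFresh xs x (qOp \<delta> inp binp) =
     ((\<forall>i. (map_option (qFresh xs x) \<circ> inp) i \<noteq> Some False) \<and>
      (\<forall>i. (map_option (qFreshAbs xs x) \<circ> binp) i \<noteq> Some False))"
| "qFreshAbs xs x (qAbs ys y X) = ((ys = xs \<and> y = x) \<or> qFresh xs x X)"

primrec qGood :: "('index,'bindex,'varsort,'var,'opsym) qterm \<Rightarrow> bool"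
and qGoodAbs :: "('index,'bindex,'varsort,'var,'opsym) qabs \<Rightarrow> bool" where
  "qGood (qVar ys y) = True"
| "qGood (qOp \<delta> inp binp) =
     ((\<forall>i. (map_option qGood \<circ> inp) i \<noteq> Some False) \<and>
      (\<forall>i. (map_option qGoodAbs \<circ> binp) i \<noteq> Some False) \<and>
      card_of (idom inp) <o card_of (UNIV :: 'var set) \<and> card_of (idom binp) <o card_of (UNIV :: 'var set))"
| "qGoodAbs (qAbs ys y X) = qGood X"

inductive alpha :: "('index,'bindex,'varsort,'var,'opsym) qterm \<Rightarrow> ('index,'bindex,'varsort,'var,'opsym) qterm \<Rightarrow> bool"
and alphaAbs :: "('index,'bindex,'varsort,'var,'opsym) qabs \<Rightarrow> ('index,'bindex,'varsort,'var,'opsym) qabs \<Rightarrow> bool" where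
  alpha_Var: "alpha (qVar xs x) (qVar xs x)"
| alpha_Op: "\<lbrakk>\<forall>i. rel_option alpha (inp i) (inp' i); \<forall>i. rel_option alphaAbs (binp i) (binp' i)\<rbrakk>
     \<Longrightarrow> alpha (qOp \<delta> inp binp) (qOp \<delta> inp' binp')"
| alpha_Abs: "\<lbrakk>y \<noteq> x; y \<noteq> x'; qFresh xs y X; qFresh xs y X';
     alpha (qSwap xs y x X) (qSwap xs y x' X')\<rbrakk>
     \<Longrightarrow> alphaAbs (qAbs xs x X) (qAbs xs x' X')"

definition pickFresh :: "('varsort \<Rightarrow> 'var \<Rightarrow> ('index,'bindex,'varsort,'var,'opsym) qterm) \<Rightarrow> 'varsort \<Rightarrow> 'var \<Rightarrow> ('index,'bindex,'varsort,'var,'opsym) qterm \<Rightarrow> 'var" where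
  "pickFresh \<rho> xs x X = (SOME z. qFreshAbs xs z (qAbs xs x X) \<and>
      (\<forall>ys y. \<not> qFreshAbs ys y (qAbs xs x X) \<longrightarrow> qFresh xs z (\<rho> ys y)))"

primrec qPsubst :: "('varsort \<Rightarrow> 'var \<Rightarrow> ('index,'bindex,'varsort,'var,'opsym) qterm) \<Rightarrow> ('index,'bindex,'varsort,'var,'opsym) qterm \<Rightarrow> ('index,'bindex,'varsort,'var,'opsym) qterm"
and qPsubstAbs :: "('varsort \<Rightarrow> 'var \<Rightarrow> ('index,'bindex,'varsort,'var,'opsym) qterm) \<Rightarrow> ('index,'bindex,'varsort,'var,'opsym) qabs \<Rightarrow> ('index,'bindex,'varsort,'var,'opsym) qabs" where
  "qPsubst \<rho> (qVar ys y) = \<rho> ys y"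
| "qPsubst \<rho> (qOp \<delta> inp binp) = qOp \<delta> (map_option (qPsubst \<rho>) \<circ> inp) (map_option (qPsubstAbs \<rho>) \<circ> binp)"
| "qPsubstAbs \<rho> (qAbs xs x X) =
     (let z = pickFresh \<rho> xs x X in qAbs xs z (qPsubst (\<rho>(xs := (\<rho> xs)(x := qVar xs z))) X))"

text \<open>We quotient by the equivalence closure of alpha (alpha itself is an equivalence
  on good quasi-terms).\<close>
quotient_type ('index,'bindex,'varsort,'var,'opsym) trm =
  "('index,'bindex,'varsort,'var,'opsym) qterm" / "equivclp alpha"
  by simp

quotient_type ('index,'bindex,'varsort,'var,'opsym) tabs =
  "('index,'bindex,'varsort,'var,'opsym) qabs" / "equivclp alphaAbs"
  by simp

definition Var :: "'varsort \<Rightarrow> 'var \<Rightarrow> ('index,'bindex,'varsort,'var,'opsym) trm" where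
  "Var xs x = abs_trm (qVar xs x)"

definition Op :: "'opsym \<Rightarrow> ('index, ('index,'bindex,'varsort,'var,'opsym) trm) input
   \<Rightarrow> ('bindex, ('index,'bindex,'varsort,'var,'opsym) tabs) input \<Rightarrow> ('index,'bindex,'varsort,'var,'opsym) trm" where
  "Op \<delta> inp binp = abs_trm (qOp \<delta> (lift rep_trm inp) (lift rep_tabs binp))"

definition Abs :: "'varsort \<Rightarrow> 'var \<Rightarrow> ('index,'bindex,'varsort,'var,'opsym) trm \<Rightarrow> ('index,'bindex,'varsort,'var,'opsym) tabs" where
  "Abs xs x X = abs_tabs (qAbs xs x (rep_trm X))"

definition good :: "('index,'bindex,'varsort,'var,'opsym) trm \<Rightarrow> bool" where
  "good X = qGood (rep_trm X)"

definition goodAbs :: "('index,'bindex,'varsort,'var,'opsym) tabs \<Rightarrow> bool" where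
  "goodAbs A = qGoodAbs (rep_tabs A)"

definition fresh :: "'varsort \<Rightarrow> 'var \<Rightarrow> ('index,'bindex,'varsort,'var,'opsym) trm \<Rightarrow> bool" where
  "fresh xs x X = qFresh xs x (rep_trm X)"

text \<open>subst X Y y ys  =  X[Y/y]_ys\<close>
definition subst :: "('index,'bindex,'varsort,'var,'opsym) trm \<Rightarrow> ('index,'bindex,'varsort,'var,'opsym) trm
   \<Rightarrow> 'var \<Rightarrow> 'varsort \<Rightarrow> ('index,'bindex,'varsort,'var,'opsym) trm" where
  "subst X Y y ys = abs_trm (qPsubst (\<lambda>zs z. if zs = ys \<and> z = y then rep_trm Y else qVar zs z) (rep_trm X))"

definition goodInp :: "('index, ('index,'bindex,'varsort,'var,'opsym) trm) input \<Rightarrow> bool" where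
  "goodInp inp = ((\<forall>i X. inp i = Some X \<longrightarrow> good X) \<and> card_of (idom inp) <o card_of (UNIV :: 'var set))"

definition goodBinp :: "('bindex, ('index,'bindex,'varsort,'var,'opsym) tabs) input \<Rightarrow> bool" where
  "goodBinp binp = ((\<forall>i A. binp i = Some A \<longrightarrow> goodAbs A) \<and> card_of (idom binp) <o card_of (UNIV :: 'var set))"

definition updVal :: "('varsort \<Rightarrow> 'var \<Rightarrow> 'd) \<Rightarrow> 'varsort \<Rightarrow> 'var \<Rightarrow> 'd \<Rightarrow> ('varsort \<Rightarrow> 'var \<Rightarrow> 'd)" where
  "updVal \<rho> xs x d = (\<lambda>ys y. if ys = xs \<and> y = x then d else \<rho> ys y)"

end

theory Submission
  imports Defs
begin
lemma fin_less: "finite (A::'a set) \<Longrightarrow> infinite (UNIV :: 'b set) \<Longrightarrow> |A| <o |UNIV :: 'b set|"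
  by (rule finite_ordLess_infinite) (auto simp: Field_card_of card_of_well_order_on)

lemma qGood_FV:
  fixes X :: "('index,'bindex,'varsort,'var,'opsym) qterm" and A :: "('index,'bindex,'varsort,'var,'opsym) qabs"
  assumes inf: "infinite (UNIV :: 'var set)" and reg: "regularCard (card_of (UNIV :: 'var set))"
  shows "qGood X \<Longrightarrow> |{(ys,y). \<not> qFresh ys y X}| <o |UNIV :: 'var set|"
    "qGoodAbs A \<Longrightarrow> |{(ys,y). \<not> qFreshAbs ys y A}| <o |UNIV :: 'var set|"
proof (induct X and A)
  case (qVar x1 x2)
  have "{(ys,y). \<not> qFresh ys y (qVar x1 x2 :: ('index,'bindex,'varsort,'var,'opsym) qterm)} = {(x1,x2)}" by auto
  then show ?case by (simp add: fin_less[OF _ inf])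
next
  case (qOp \<delta> inp binp)
  have Ci: "Cinfinite |UNIV :: 'var set|" using inf by (simp add: cinfinite_def Field_card_of card_of_Card_order card_of_card_order_on)
  let ?U1 = "\<Union>i\<in>idom inp. {(ys,y). \<not> qFresh ys y (the (inp i))}"
  let ?U2 = "\<Union>i\<in>idom binp. {(ys,y). \<not> qFreshAbs ys y (the (binp i))}"
  have sub: "{(ys,y). \<not> qFresh ys y (qOp \<delta> inp binp)} \<subseteq> ?U1 \<union> ?U2"
  proof
    fix p assume "p \<in> {(ys,y). \<not> qFresh ys y (qOp \<delta> inp binp)}"
    moreover obtain ys y where p: "p = (ys,y)" by (cases p)
    ultimately have "\<not> qFresh ys y (qOp \<delta> inp binp)" by simp
    then have "(\<exists>i. (map_option (qFresh ys y) \<circ> inp) i = Some False) \<or> (\<exists>i. (map_option (qFreshAbs ys y) \<circ> binp) i = Some False)"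
      by auto
    then show "p \<in> ?U1 \<union> ?U2" unfolding p idom_def by auto
  qed
  have 1: "|?U1| <o |UNIV :: 'var set|"
  proof (rule regularCard_UNION_bound[OF Ci reg])
    show "|idom inp| <o |UNIV :: 'var set|" using qOp.prems by simp
    fix i assume i: "i \<in> idom inp"
    then obtain X where X: "inp i = Some X" by (auto simp: idom_def)
    have "qGood X" using qOp.prems X by (auto; metis comp_apply option.simps(9))
    then show "|{(ys,y). \<not> qFresh ys y (the (inp i))}| <o |UNIV :: 'var set|"
      using qOp(1)[OF rangeI[of inp i], of X] X by simp
  qed
  have 2: "|?U2| <o |UNIV :: 'var set|"
  proof (rule regularCard_UNION_bound[OF Ci reg])
    show "|idom binp| <o |UNIV :: 'var set|" using qOp.prems by simp
    fix i assume i: "i \<in> idom binp"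
    then obtain X where X: "binp i = Some X" by (auto simp: idom_def)
    have "qGoodAbs X" using qOp.prems X by (auto; metis comp_apply option.simps(9))
    then show "|{(ys,y). \<not> qFreshAbs ys y (the (binp i))}| <o |UNIV :: 'var set|"
      using qOp(2)[OF rangeI[of binp i], of X] X by simp
  qed
  have "|?U1 \<union> ?U2| <o |UNIV :: 'var set|" by (rule card_of_Un_ordLess_infinite[OF inf 1 2])
  then show ?case using card_of_mono1[OF sub] ordLeq_ordLess_trans by blast
next
  case (qAbs xs x X)
  have sub: "{(ys,y). \<not> qFreshAbs ys y (qAbs xs x X)} \<subseteq> {(ys,y). \<not> qFresh ys y X}" by auto
  then show ?case using qAbs card_of_mono1[OF sub] ordLeq_ordLess_trans by fastforce
qed

lemma pickFresh_ex:
  fixes X :: "('index,'bindex,'varsort,'var,'opsym) qterm"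
  assumes inf: "infinite (UNIV :: 'var set)" and reg: "regularCard (card_of (UNIV :: 'var set))"
    and g: "qGood X" and gs: "\<forall>ys y. qGood (\<sigma> ys y)"
  shows "\<exists>z. qFreshAbs xs z (qAbs xs x X) \<and>
      (\<forall>ys y. \<not> qFreshAbs ys y (qAbs xs x X) \<longrightarrow> qFresh xs z (\<sigma> ys y))"
proof -
  have Ci: "Cinfinite |UNIV :: 'var set|" using inf by (simp add: cinfinite_def Field_card_of card_of_Card_order card_of_card_order_on)
  let ?F = "{(ys,y). \<not> qFreshAbs ys y (qAbs xs x X)}"
  let ?B = "snd ` ?F \<union> (\<Union>p\<in>?F. snd ` {(ys,y). \<not> qFresh ys y (\<sigma> (fst p) (snd p))})"
  have "qGoodAbs (qAbs xs x X)" using g by simp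
  from qGood_FV(2)[OF inf reg this] have F: "|?F| <o |UNIV :: 'var set|" .
  have 1: "|snd ` ?F| <o |UNIV :: 'var set|" using card_of_image ordLeq_ordLess_trans F by blast
  have 2: "|\<Union>p\<in>?F. snd ` {(ys,y). \<not> qFresh ys y (\<sigma> (fst p) (snd p))}| <o |UNIV :: 'var set|"
  proof (rule regularCard_UNION_bound[OF Ci reg F])
    fix p
    have "|{(ys,y). \<not> qFresh ys y (\<sigma> (fst p) (snd p))}| <o |UNIV :: 'var set|"
      using qGood_FV(1)[OF inf reg] gs by blast
    then show "|snd ` {(ys,y). \<not> qFresh ys y (\<sigma> (fst p) (snd p))}| <o |UNIV :: 'var set|"
      using card_of_image ordLeq_ordLess_trans by blast
  qed
  have "|?B| <o |UNIV :: 'var set|" by (rule card_of_Un_ordLess_infinite[OF inf 1 2])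
  then have "?B \<noteq> UNIV" using ordLess_irreflexive by force
  then obtain z where z: "z \<notin> ?B" by blast
  show ?thesis
  proof (intro exI conjI allI impI)
    show "qFreshAbs xs z (qAbs xs x X)"
    proof (rule ccontr)
      assume "\<not> qFreshAbs xs z (qAbs xs x X)"
      then have "(xs,z) \<in> ?F" by simp
      then have "z \<in> snd ` ?F" by force
      then show False using z by blast
    qed
    fix ys y assume h: "\<not> qFreshAbs ys y (qAbs xs x X)"
    show "qFresh xs z (\<sigma> ys y)"
    proof (rule ccontr)
      assume "\<not> qFresh xs z (\<sigma> ys y)"
      then have "z \<in> snd ` {(ys',y'). \<not> qFresh ys' y' (\<sigma> (fst (ys,y)) (snd (ys,y)))}" by force
      moreover have "(ys,y) \<in> ?F" using h by simp
      ultimately show False using z by blast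
    qed
  qed
qed
context fixes op :: "'opsym \<Rightarrow> ('index, 'Dt) input \<Rightarrow> ('bindex, 'Da) input \<Rightarrow> 'Dt"
    and ab :: "'varsort \<Rightarrow> ('Dt \<Rightarrow> 'Dt) \<Rightarrow> 'Da"
begin
primrec qsem :: "('index,'bindex,'varsort,'var,'opsym) qterm \<Rightarrow> ('varsort \<Rightarrow> 'var \<Rightarrow> 'Dt) \<Rightarrow> 'Dt"
and qsemAbs :: "('index,'bindex,'varsort,'var,'opsym) qabs \<Rightarrow> ('varsort \<Rightarrow> 'var \<Rightarrow> 'Dt) \<Rightarrow> 'Da" where
  "qsem (qVar xs x) \<rho> = \<rho> xs x"
| "qsem (qOp \<delta> inp binp) \<rho> = op \<delta> (map_option (\<lambda>X. qsem X \<rho>) \<circ> inp) (map_option (\<lambda>A. qsemAbs A \<rho>) \<circ> binp)"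
| "qsemAbs (qAbs xs x X) \<rho> = ab xs (\<lambda>d. qsem X (updVal \<rho> xs x d))"

lemma qsem_cong:
  fixes X :: "('index,'bindex,'varsort,'var,'opsym) qterm" and A :: "('index,'bindex,'varsort,'var,'opsym) qabs"
  shows
  "\<forall>\<rho> \<rho>'. (\<forall>ys y. \<not> qFresh ys y X \<longrightarrow> \<rho> ys y = \<rho>' ys y) \<longrightarrow> qsem X \<rho> = qsem X \<rho>'"
  "\<forall>\<rho> \<rho>'. (\<forall>ys y. \<not> qFreshAbs ys y A \<longrightarrow> \<rho> ys y = \<rho>' ys y) \<longrightarrow> qsemAbs A \<rho> = qsemAbs A \<rho>'"
proof (induct X and A)
  case (qVar x1 x2)
  then show ?case by simp
next
  case (qOp \<delta> inp binp)
  show ?case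
  proof (intro allI impI)
    fix \<rho> \<rho>' :: "'varsort \<Rightarrow> 'var \<Rightarrow> 'Dt"
    assume h: "\<forall>ys y. \<not> qFresh ys y (qOp \<delta> inp binp) \<longrightarrow> \<rho> ys y = \<rho>' ys y"
    have 1: "map_option (\<lambda>X. qsem X \<rho>) \<circ> inp = map_option (\<lambda>X. qsem X \<rho>') \<circ> inp"
    proof
      fix i show "(map_option (\<lambda>X. qsem X \<rho>) \<circ> inp) i = (map_option (\<lambda>X. qsem X \<rho>') \<circ> inp) i"
      proof (cases "inp i")
        case (Some X)
        have "\<forall>ys y. \<not> qFresh ys y X \<longrightarrow> \<rho> ys y = \<rho>' ys y"
          using h Some by (auto; metis comp_apply option.simps(9))
        then show ?thesis using qOp(1)[OF rangeI[of inp i], of X] Some by auto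
      qed simp
    qed
    have 2: "map_option (\<lambda>X. qsemAbs X \<rho>) \<circ> binp = map_option (\<lambda>X. qsemAbs X \<rho>') \<circ> binp"
    proof
      fix i show "(map_option (\<lambda>X. qsemAbs X \<rho>) \<circ> binp) i = (map_option (\<lambda>X. qsemAbs X \<rho>') \<circ> binp) i"
      proof (cases "binp i")
        case (Some X)
        have "\<forall>ys y. \<not> qFreshAbs ys y X \<longrightarrow> \<rho> ys y = \<rho>' ys y"
          using h Some by (auto; metis comp_apply option.simps(9))
        then show ?thesis using qOp(2)[OF rangeI[of binp i], of X] Some by auto
      qed simp
    qed
    show "qsem (qOp \<delta> inp binp) \<rho> = qsem (qOp \<delta> inp binp) \<rho>'" using 1 2 by simp
  qed
next
  case (qAbs xs x X)
  show ?case
  proof (intro allI impI)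
    fix \<rho> \<rho>' :: "'varsort \<Rightarrow> 'var \<Rightarrow> 'Dt"
    assume h: "\<forall>ys y. \<not> qFreshAbs ys y (qAbs xs x X) \<longrightarrow> \<rho> ys y = \<rho>' ys y"
    have "\<And>d. qsem X (updVal \<rho> xs x d) = qsem X (updVal \<rho>' xs x d)"
      using h by (intro qAbs[rule_format]) (auto simp: updVal_def)
    then show "qsemAbs (qAbs xs x X) \<rho> = qsemAbs (qAbs xs x X) \<rho>'" by simp
  qed
qed

lemma sw_inj: "(sw xs x y zs z = sw xs x y zs z') = (z = z')"
  unfolding sw_def by auto

lemma qsem_swap:
  fixes X :: "('index,'bindex,'varsort,'var,'opsym) qterm" and A :: "('index,'bindex,'varsort,'var,'opsym) qabs"
  shows
  "\<forall>\<rho>. qsem (qSwap xs x y X) \<rho> = qsem X (\<lambda>zs z. \<rho> zs (sw xs x y zs z))"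
  "\<forall>\<rho>. qsemAbs (qSwapAbs xs x y A) \<rho> = qsemAbs A (\<lambda>zs z. \<rho> zs (sw xs x y zs z))"
proof (induct X and A)
  case (qVar x1 x2)
  then show ?case by simp
next
  case (qOp \<delta> inp binp)
  show ?case
  proof
    fix \<rho> :: "'varsort \<Rightarrow> 'var \<Rightarrow> 'Dt"
    have 1: "map_option (\<lambda>X. qsem X \<rho>) \<circ> (map_option (qSwap xs x y) \<circ> inp) = map_option (\<lambda>X. qsem X (\<lambda>zs z. \<rho> zs (sw xs x y zs z))) \<circ> inp"
    proof
      fix i show "(map_option (\<lambda>X. qsem X \<rho>) \<circ> (map_option (qSwap xs x y) \<circ> inp)) i = (map_option (\<lambda>X. qsem X (\<lambda>zs z. \<rho> zs (sw xs x y zs z))) \<circ> inp) i"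
        using qOp(1)[OF rangeI[of inp i]] by (cases "inp i") auto
    qed
    have 2: "map_option (\<lambda>X. qsemAbs X \<rho>) \<circ> (map_option (qSwapAbs xs x y) \<circ> binp) = map_option (\<lambda>X. qsemAbs X (\<lambda>zs z. \<rho> zs (sw xs x y zs z))) \<circ> binp"
    proof
      fix i show "(map_option (\<lambda>X. qsemAbs X \<rho>) \<circ> (map_option (qSwapAbs xs x y) \<circ> binp)) i = (map_option (\<lambda>X. qsemAbs X (\<lambda>zs z. \<rho> zs (sw xs x y zs z))) \<circ> binp) i"
        using qOp(2)[OF rangeI[of binp i]] by (cases "binp i") auto
    qed
    show "qsem (qSwap xs x y (qOp \<delta> inp binp)) \<rho> = qsem (qOp \<delta> inp binp) (\<lambda>zs z. \<rho> zs (sw xs x y zs z))"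
      using 1 2 by simp
  qed
next
  case (qAbs zs z X)
  show ?case
  proof
    fix \<rho> :: "'varsort \<Rightarrow> 'var \<Rightarrow> 'Dt"
    have "\<And>d. (\<lambda>ws w. updVal \<rho> zs (sw xs x y zs z) d ws (sw xs x y ws w)) = updVal (\<lambda>ws w. \<rho> ws (sw xs x y ws w)) zs z d"
      unfolding updVal_def by (auto simp: fun_eq_iff sw_inj)
    then show "qsemAbs (qSwapAbs xs x y (qAbs zs z X)) \<rho> = qsemAbs (qAbs zs z X) (\<lambda>zs z. \<rho> zs (sw xs x y zs z))"
      using qAbs by simp
  qed
qed

lemma qsem_alpha:
  fixes X X' :: "('index,'bindex,'varsort,'var,'opsym) qterm" and A A' :: "('index,'bindex,'varsort,'var,'opsym) qabs"
  shows
  "alpha X X' \<Longrightarrow> (\<forall>\<rho>. qsem X \<rho> = qsem X' \<rho>)" "alphaAbs A A' \<Longrightarrow> (\<forall>\<rho>. qsemAbs A \<rho> = qsemAbs A' \<rho>)"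
proof (induct rule: alpha_alphaAbs.inducts)
  case (alpha_Var xs x)
  then show ?case by simp
next
  case (alpha_Op inp inp' binp binp' \<delta>)
  show ?case
  proof
    fix \<rho> :: "'varsort \<Rightarrow> 'var \<Rightarrow> 'Dt"
    have 1: "map_option (\<lambda>X. qsem X \<rho>) \<circ> inp = map_option (\<lambda>X. qsem X \<rho>) \<circ> inp'"
    proof
      fix i show "(map_option (\<lambda>X. qsem X \<rho>) \<circ> inp) i = (map_option (\<lambda>X. qsem X \<rho>) \<circ> inp') i"
        using alpha_Op(1)[rule_format, of i] by (cases "inp i"; cases "inp' i"; fastforce)
    qed
    have 2: "map_option (\<lambda>X. qsemAbs X \<rho>) \<circ> binp = map_option (\<lambda>X. qsemAbs X \<rho>) \<circ> binp'"
    proof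
      fix i show "(map_option (\<lambda>X. qsemAbs X \<rho>) \<circ> binp) i = (map_option (\<lambda>X. qsemAbs X \<rho>) \<circ> binp') i"
        using alpha_Op(2)[rule_format, of i] by (cases "binp i"; cases "binp' i"; fastforce)
    qed
    show "qsem (qOp \<delta> inp binp) \<rho> = qsem (qOp \<delta> inp' binp') \<rho>" using 1 2 by simp
  qed
next
  case (alpha_Abs y x x' xs X X')
  show ?case
  proof
    fix \<rho> :: "'varsort \<Rightarrow> 'var \<Rightarrow> 'Dt"
    have "qsem X (updVal \<rho> xs x d) = qsem X' (updVal \<rho> xs x' d)" for d
    proof -
      define \<sigma> where "\<sigma> = updVal \<rho> xs y d"
      have a: "qsem X (updVal \<rho> xs x d) = qsem X (\<lambda>zs z. \<sigma> zs (sw xs y x zs z))"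
        using qsem_cong(1)[of X] alpha_Abs(1,3) unfolding \<sigma>_def updVal_def sw_def by auto
      have b: "qsem X' (updVal \<rho> xs x' d) = qsem X' (\<lambda>zs z. \<sigma> zs (sw xs y x' zs z))"
        using qsem_cong(1)[of X'] alpha_Abs(2,4) unfolding \<sigma>_def updVal_def sw_def by auto
      show ?thesis using a b alpha_Abs(6) qsem_swap(1) by metis
    qed
    then show "qsemAbs (qAbs xs x X) \<rho> = qsemAbs (qAbs xs x' X') \<rho>" by simp
  qed
qed


lemma qsem_psubst:
  fixes X :: "('index,'bindex,'varsort,'var,'opsym) qterm" and A :: "('index,'bindex,'varsort,'var,'opsym) qabs"
  assumes inf: "infinite (UNIV :: 'var set)" and reg: "regularCard (card_of (UNIV :: 'var set))"
  shows "\<forall>\<sigma> \<rho>. qGood X \<longrightarrow> (\<forall>ys y. qGood (\<sigma> ys y)) \<longrightarrow> qsem (qPsubst \<sigma> X) \<rho> = qsem X (\<lambda>ys y. qsem (\<sigma> ys y) \<rho>)"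
    "\<forall>\<sigma> \<rho>. qGoodAbs A \<longrightarrow> (\<forall>ys y. qGood (\<sigma> ys y)) \<longrightarrow> qsemAbs (qPsubstAbs \<sigma> A) \<rho> = qsemAbs A (\<lambda>ys y. qsem (\<sigma> ys y) \<rho>)"
proof (induct X and A)
  case (qVar x1 x2)
  then show ?case by simp
next
  case (qOp \<delta> inp binp)
  show ?case
  proof (intro allI impI)
    fix \<sigma> :: "'varsort \<Rightarrow> 'var \<Rightarrow> ('index,'bindex,'varsort,'var,'opsym) qterm" and \<rho> :: "'varsort \<Rightarrow> 'var \<Rightarrow> 'Dt"
    assume g: "qGood (qOp \<delta> inp binp)" and gs: "\<forall>ys y. qGood (\<sigma> ys y)"
    have 1: "map_option (\<lambda>X. qsem X \<rho>) \<circ> (map_option (qPsubst \<sigma>) \<circ> inp) = map_option (\<lambda>X. qsem X (\<lambda>ys y. qsem (\<sigma> ys y) \<rho>)) \<circ> inp"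
    proof
      fix i show "(map_option (\<lambda>X. qsem X \<rho>) \<circ> (map_option (qPsubst \<sigma>) \<circ> inp)) i = (map_option (\<lambda>X. qsem X (\<lambda>ys y. qsem (\<sigma> ys y) \<rho>)) \<circ> inp) i"
      proof (cases "inp i")
        case (Some X)
        have "qGood X" using g Some by (auto; metis comp_apply option.simps(9))
        then show ?thesis using qOp(1)[OF rangeI[of inp i], of X] Some gs by auto
      qed simp
    qed
    have 2: "map_option (\<lambda>X. qsemAbs X \<rho>) \<circ> (map_option (qPsubstAbs \<sigma>) \<circ> binp) = map_option (\<lambda>X. qsemAbs X (\<lambda>ys y. qsem (\<sigma> ys y) \<rho>)) \<circ> binp"
    proof
      fix i show "(map_option (\<lambda>X. qsemAbs X \<rho>) \<circ> (map_option (qPsubstAbs \<sigma>) \<circ> binp)) i = (map_option (\<lambda>X. qsemAbs X (\<lambda>ys y. qsem (\<sigma> ys y) \<rho>)) \<circ> binp) i"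
      proof (cases "binp i")
        case (Some X)
        have "qGoodAbs X" using g Some by (auto; metis comp_apply option.simps(9))
        then show ?thesis using qOp(2)[OF rangeI[of binp i], of X] Some gs by auto
      qed simp
    qed
    show "qsem (qPsubst \<sigma> (qOp \<delta> inp binp)) \<rho> = qsem (qOp \<delta> inp binp) (\<lambda>ys y. qsem (\<sigma> ys y) \<rho>)"
      using 1 2 by simp
  qed
next
  case (qAbs xs x X)
  show ?case
  proof (intro allI impI)
    fix \<sigma> :: "'varsort \<Rightarrow> 'var \<Rightarrow> ('index,'bindex,'varsort,'var,'opsym) qterm" and \<rho> :: "'varsort \<Rightarrow> 'var \<Rightarrow> 'Dt"
    assume g: "qGoodAbs (qAbs xs x X)" and gs: "\<forall>ys y. qGood (\<sigma> ys y)"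
    define z where "z = pickFresh \<sigma> xs x X"
    have gX: "qGood X" using g by simp
    have zp: "qFreshAbs xs z (qAbs xs x X) \<and>
      (\<forall>ys y. \<not> qFreshAbs ys y (qAbs xs x X) \<longrightarrow> qFresh xs z (\<sigma> ys y))"
      unfolding z_def pickFresh_def by (rule someI_ex[OF pickFresh_ex[OF inf reg gX gs]])
    define \<sigma>' where "\<sigma>' = \<sigma>(xs := (\<sigma> xs)(x := qVar xs z))"
    have gs': "\<forall>ys y. qGood (\<sigma>' ys y)" using gs by (simp add: \<sigma>'_def)
    have e: "qsem X (\<lambda>ys y. qsem (\<sigma>' ys y) (updVal \<rho> xs z d)) = qsem X (updVal (\<lambda>ys y. qsem (\<sigma> ys y) \<rho>) xs x d)" for d
    proof (rule qsem_cong(1)[rule_format])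
      fix ys y assume nf: "\<not> qFresh ys y X"
      show "qsem (\<sigma>' ys y) (updVal \<rho> xs z d) = updVal (\<lambda>ys y. qsem (\<sigma> ys y) \<rho>) xs x d ys y"
      proof (cases "ys = xs \<and> y = x")
        case True
        then show ?thesis by (simp add: \<sigma>'_def updVal_def)
      next
        case False
        then have "\<not> qFreshAbs ys y (qAbs xs x X)" using nf by auto
        then have fz: "qFresh xs z (\<sigma> ys y)" using zp by blast
        have "\<sigma>' ys y = \<sigma> ys y" using False by (auto simp: \<sigma>'_def)
        moreover have "qsem (\<sigma> ys y) (updVal \<rho> xs z d) = qsem (\<sigma> ys y) \<rho>"
          using fz by (intro qsem_cong(1)[rule_format]) (auto simp: updVal_def)
        ultimately show ?thesis using False unfolding updVal_def by auto
      qed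
    qed
    have "qsem (qPsubst \<sigma>' X) (updVal \<rho> xs z d) = qsem X (\<lambda>ys y. qsem (\<sigma>' ys y) (updVal \<rho> xs z d))" for d
      using qAbs gX gs' by blast
    then show "qsemAbs (qPsubstAbs \<sigma> (qAbs xs x X)) \<rho> = qsemAbs (qAbs xs x X) (\<lambda>ys y. qsem (\<sigma> ys y) \<rho>)"
      using e by (simp add: Let_def z_def[symmetric] \<sigma>'_def[symmetric])
  qed
qed

end

lemma equivclp_qsem:
  "equivclp alpha q q' \<Longrightarrow> qsem op ab q = qsem op ab q'"
proof (induct rule: equivclp_induct)
  case base then show ?case by simp
next
  case (step y z)
  have "qsem op ab y = qsem op ab z" using step(2) by (rule_tac ext) (metis qsem_alpha(1))
  then show ?case using step(3) by simp
qed

lemma equivclp_qsemAbs: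
  "equivclp alphaAbs q q' \<Longrightarrow> qsemAbs op ab q = qsemAbs op ab q'"
proof (induct rule: equivclp_induct)
  case base then show ?case by simp
next
  case (step y z)
  have "qsemAbs op ab y = qsemAbs op ab z" using step(2) by (rule_tac ext) (metis qsem_alpha(2))
  then show ?case using step(3) by simp
qed

theorem theorem3:
  fixes op :: "'opsym \<Rightarrow> ('index, 'Dt) input \<Rightarrow> ('bindex, 'Da) input \<Rightarrow> 'Dt"
    and ab :: "'varsort \<Rightarrow> ('Dt \<Rightarrow> 'Dt) \<Rightarrow> 'Da"
  assumes "infinite (UNIV :: 'var set)"
    and "regularCard (card_of (UNIV :: 'var set))"
  shows "\<exists>(sem :: ('index,'bindex,'varsort,'var,'opsym) trm \<Rightarrow> ('varsort \<Rightarrow> 'var \<Rightarrow> 'Dt) \<Rightarrow> 'Dt)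
           (semAbs :: ('index,'bindex,'varsort,'var,'opsym) tabs \<Rightarrow> ('varsort \<Rightarrow> 'var \<Rightarrow> 'Dt) \<Rightarrow> 'Da).
     \<forall>\<rho> :: 'varsort \<Rightarrow> 'var \<Rightarrow> 'Dt.
       (\<forall>xs x. sem (Var xs x) \<rho> = \<rho> xs x) \<and>
       (\<forall>\<delta> inp binp. goodInp inp \<and> goodBinp binp \<longrightarrow>
          sem (Op \<delta> inp binp) \<rho> = op \<delta> (lift (\<lambda>X. sem X \<rho>) inp) (lift (\<lambda>A. semAbs A \<rho>) binp)) \<and>
       (\<forall>xs x X. good X \<longrightarrow>
          semAbs (Abs xs x X) \<rho> = ab xs (\<lambda>d. sem X (updVal \<rho> xs x d))) \<and>
       (\<forall>X Y y ys. good X \<and> good Y \<longrightarrow>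
          sem (subst X Y y ys) \<rho> = sem X (updVal \<rho> ys y (sem Y \<rho>))) \<and>
       (\<forall>xs x X \<rho>'. good X \<and> fresh xs x X \<and> (\<forall>ys y. (ys, y) \<noteq> (xs, x) \<longrightarrow> \<rho> ys y = \<rho>' ys y) \<longrightarrow>
          sem X \<rho> = sem X \<rho>')"
proof -
  note inf = assms(1) and reg = assms(2)
  define sem where "sem = (\<lambda>X :: ('index,'bindex,'varsort,'var,'opsym) trm. qsem op ab (rep_trm X))"
  define semAbs where "semAbs = (\<lambda>A :: ('index,'bindex,'varsort,'var,'opsym) tabs. qsemAbs op ab (rep_tabs A))"
  have ra: "qsem op ab (rep_trm (abs_trm q)) = qsem op ab q" for q :: "('index,'bindex,'varsort,'var,'opsym) qterm"
    by (rule equivclp_qsem, rule Quotient3_rep_abs[OF Quotient3_trm]) simp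
  have raA: "qsemAbs op ab (rep_tabs (abs_tabs q)) = qsemAbs op ab q" for q :: "('index,'bindex,'varsort,'var,'opsym) qabs"
    by (rule equivclp_qsemAbs, rule Quotient3_rep_abs[OF Quotient3_tabs]) simp
  show ?thesis
  proof (intro exI[of _ sem] exI[of _ semAbs] allI conjI impI)
    fix \<rho> :: "'varsort \<Rightarrow> 'var \<Rightarrow> 'Dt"
    fix xs x show "sem (Var xs x) \<rho> = \<rho> xs x"
      unfolding sem_def Var_def ra by simp
  next
    fix \<rho> :: "'varsort \<Rightarrow> 'var \<Rightarrow> 'Dt" and \<delta> inp binp
    show "sem (Op \<delta> inp binp) \<rho> = op \<delta> (lift (\<lambda>X. sem X \<rho>) inp) (lift (\<lambda>A. semAbs A \<rho>) binp)"
      unfolding sem_def semAbs_def Op_def ra by (simp add: lift_def option.map_comp comp_def)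
  next
    fix \<rho> :: "'varsort \<Rightarrow> 'var \<Rightarrow> 'Dt" and xs x X
    show "semAbs (Abs xs x X) \<rho> = ab xs (\<lambda>d. sem X (updVal \<rho> xs x d))"
      unfolding sem_def semAbs_def Abs_def raA by simp
  next
    fix \<rho> :: "'varsort \<Rightarrow> 'var \<Rightarrow> 'Dt" and X Y :: "('index,'bindex,'varsort,'var,'opsym) trm" and y ys
    assume g: "good X \<and> good Y"
    define \<sigma> where "\<sigma> = (\<lambda>zs z. if zs = ys \<and> z = y then rep_trm Y else qVar zs z)"
    have gs: "\<forall>zs z. qGood (\<sigma> zs z)" using g by (simp add: \<sigma>_def good_def)
    have "qsem op ab (qPsubst \<sigma> (rep_trm X)) \<rho> = qsem op ab (rep_trm X) (\<lambda>zs z. qsem op ab (\<sigma> zs z) \<rho>)"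
      using g gs by (intro qsem_psubst(1)[OF inf reg, rule_format]) (auto simp: good_def)
    moreover have "(\<lambda>zs z. qsem op ab (\<sigma> zs z) \<rho>) = updVal \<rho> ys y (qsem op ab (rep_trm Y) \<rho>)"
      by (auto simp: fun_eq_iff \<sigma>_def updVal_def)
    ultimately show "sem (subst X Y y ys) \<rho> = sem X (updVal \<rho> ys y (sem Y \<rho>))"
      unfolding sem_def subst_def ra \<sigma>_def[symmetric] by simp
  next
    fix \<rho> \<rho>' :: "'varsort \<Rightarrow> 'var \<Rightarrow> 'Dt" and xs x and X :: "('index,'bindex,'varsort,'var,'opsym) trm"
    assume h: "good X \<and> fresh xs x X \<and> (\<forall>ys y. (ys, y) \<noteq> (xs, x) \<longrightarrow> \<rho> ys y = \<rho>' ys y)"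
    show "sem X \<rho> = sem X \<rho>'"
      unfolding sem_def using h
      by (intro qsem_cong(1)[rule_format]) (auto simp: fresh_def)
  qed
qed

end
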